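(* Let $C:\mathbb{R}^n\to\mathbb{R}$ be convex, increasing and $\mathbf 1$-invariant with $C(\vec 0)>0$, and define $\varphi:\mathbb{R}^n_{>0}\to\mathbb{R}$ by $\varphi(\vec q)=\alpha$, where $\alpha>0$ is the unique positive number with $C(-\vec q/\alpha)=0$. Then $\varphi$ is 1-homogeneous, concave and increasing.
   Context: $\mathbf 1=(1,\dots,1)$. $C$ is $\mathbf 1$-invariant if $C(\vec q+\alpha\mathbf 1)=C(\vec q)+\alpha$ for all $\vec q,\alpha$; a function is increasing if $f(\vec q)>f(\vec q')$ whenever $\vec q\succeq\vec q'$ coordinatewise and $\vec q\neq\vec q'$ (both in its domain). $\mathbb{R}^n_{>0}$ is the set of vectors with all coordinates strictly positive. A function $f$ on $\mathbb{R}^n_{>0}$ is 1-homogeneous if $f(\alpha\vec q)=\alpha f(\vec q)$ for all $\vec q\in\mathbb{R}^n_{>0}$ and $\alpha>0$. (The existence and uniqueness of such $\alpha$ for every $\vec q\in\mathbb{R}^n_{>0}$ holds under these hypotheses.) *)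

theory Defs
  imports "HOL-Analysis.Analysis"
begin

definition ones :: "real ^ 'n" where
  "ones = (\<chi> i. 1)"

definition vge :: "real ^ 'n \<Rightarrow> real ^ 'n \<Rightarrow> bool" where
  "vge q q' \<longleftrightarrow> (\<forall>i. q $ i \<ge> q' $ i)"

definition increasing_on :: "(real ^ 'n) set \<Rightarrow> (real ^ 'n \<Rightarrow> real) \<Rightarrow> bool" where
  "increasing_on D f \<longleftrightarrow>
     (\<forall>q\<in>D. \<forall>q'\<in>D. vge q q' \<and> q \<noteq> q' \<longrightarrow> f q > f q')"

definition one_invariant :: "(real ^ 'n \<Rightarrow> real) \<Rightarrow> bool" where
  "one_invariant C \<longleftrightarrow> (\<forall>q a. C (q + a *\<^sub>R ones) = C q + a)"

definition pos_orthant :: "(real ^ 'n) set" where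
  "pos_orthant = {q. \<forall>i. q $ i > 0}"

definition homogeneous1_on :: "(real ^ 'n) set \<Rightarrow> (real ^ 'n \<Rightarrow> real) \<Rightarrow> bool" where
  "homogeneous1_on D f \<longleftrightarrow> (\<forall>q\<in>D. \<forall>a>0. f (a *\<^sub>R q) = a * f q)"

definition phi :: "(real ^ 'n \<Rightarrow> real) \<Rightarrow> real ^ 'n \<Rightarrow> real" where
  "phi C q = (THE a. a > 0 \<and> C (- ((1 / a) *\<^sub>R q)) = 0)"

end

theory Submission
  imports Defs
begin

lemma C_mono:
  fixes C :: "real ^ 'n \<Rightarrow> real"
  assumes "increasing_on UNIV C" "vge q q'"
  shows "C q' \<le> C q"
  using assms unfolding increasing_on_def by (cases "q = q'") force+

lemma C_strict:
  fixes C :: "real ^ 'n \<Rightarrow> real"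
  assumes inc: "increasing_on UNIV C" and s: "s \<in> pos_orthant" and a: "0 < a" and ab: "a < b"
  shows "C (- ((1 / a) *\<^sub>R s)) < C (- ((1 / b) *\<^sub>R s))"
proof -
  have sp: "\<And>i. s $ i > 0" using s by (simp add: pos_orthant_def)
  have le: "\<And>i. s $ i / b < s $ i / a"
    using sp a ab by (simp add: divide_strict_left_mono)
  have "vge (- ((1 / b) *\<^sub>R s)) (- ((1 / a) *\<^sub>R s))"
    unfolding vge_def using le by (simp add: less_imp_le)
  moreover have "- ((1 / b) *\<^sub>R s) \<noteq> - ((1 / a) *\<^sub>R s)"
  proof
    assume "- ((1 / b) *\<^sub>R s) = - ((1 / a) *\<^sub>R s)"
    hence "(- ((1 / b) *\<^sub>R s)) $ undefined = (- ((1 / a) *\<^sub>R s)) $ undefined"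
      by (rule arg_cong)
    thus False using le[of undefined] sp[of undefined] a ab by auto
  qed
  ultimately show ?thesis using inc unfolding increasing_on_def by blast
qed

lemma C_exists:
  fixes C :: "real ^ 'n \<Rightarrow> real"
  assumes cv: "convex_on UNIV C" and inc: "increasing_on UNIV C"
    and inv: "one_invariant C" and c0: "C 0 > 0" and s: "s \<in> pos_orthant"
  shows "\<exists>a>0. C (- ((1 / a) *\<^sub>R s)) = 0"
proof -
  have sp: "\<And>i. s $ i > 0" using s by (simp add: pos_orthant_def)
  define m where "m = Min (range (\<lambda>i. s $ i))"
  have mle: "m \<le> s $ i" for i unfolding m_def by (rule Min_le) auto
  have mpos: "m > 0"
  proof -
    have "m \<in> range (\<lambda>i. s $ i)" unfolding m_def by (rule Min_in) auto
    thus ?thesis using sp by auto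
  qed
  define T where "T = C 0 / m"
  have T: "T > 0" using c0 mpos by (simp add: T_def)
  define f where "f = (\<lambda>t::real. C (- (t *\<^sub>R s)))"
  have "vge (0 + (- (T * m)) *\<^sub>R ones) (- (T *\<^sub>R s))"
    unfolding vge_def ones_def using mle T by (simp add: mult_left_mono)
  hence "f T \<le> C (0 + (- (T * m)) *\<^sub>R ones)" unfolding f_def by (rule C_mono[OF inc])
  also have "\<dots> = C 0 - T * m"
    using inv[unfolded one_invariant_def, rule_format, of 0 "- (T * m)"] by simp
  also have "\<dots> = 0" using mpos by (simp add: T_def)
  finally have fT: "f T \<le> 0" .
  have f0: "0 \<le> f 0" using c0 by (simp add: f_def)
  have cont: "continuous_on UNIV C" by (rule convex_on_continuous[OF open_UNIV cv])
  have "isCont f x" for x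
  proof -
    have "isCont C (- (x *\<^sub>R s))" using cont by (simp add: continuous_on_eq_continuous_at)
    moreover have "isCont (\<lambda>t::real. - (t *\<^sub>R s)) x" by (intro continuous_intros)
    ultimately show ?thesis unfolding f_def by (rule isCont_o2[rotated])
  qed
  then obtain t where t: "0 \<le> t" "t \<le> T" "f t = 0"
    using IVT2[of f T 0 0] fT f0 T by auto
  have "t \<noteq> 0" using t c0 by (auto simp: f_def)
  hence tp: "t > 0" using t by simp
  show ?thesis
    by (rule exI[of _ "1 / t"]) (use tp t in \<open>simp add: f_def\<close>)
qed

lemma phi_char:
  fixes C :: "real ^ 'n \<Rightarrow> real"
  assumes cv: "convex_on UNIV C" and inc: "increasing_on UNIV C"
    and inv: "one_invariant C" and c0: "C 0 > 0" and s: "s \<in> pos_orthant"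
  shows "phi C s > 0 \<and> C (- ((1 / phi C s) *\<^sub>R s)) = 0"
proof -
  obtain a where a: "a > 0" "C (- ((1 / a) *\<^sub>R s)) = 0"
    using C_exists[OF assms] by blast
  have uniq: "b = a" if "b > 0" "C (- ((1 / b) *\<^sub>R s)) = 0" for b
  proof (rule ccontr)
    assume "b \<noteq> a"
    hence "b < a \<or> a < b" by auto
    thus False
    proof
      assume "b < a"
      from C_strict[OF inc s that(1) this] show False using a that by simp
    next
      assume "a < b"
      from C_strict[OF inc s a(1) this] show False using a that by simp
    qed
  qed
  show ?thesis unfolding phi_def
    by (rule theI[of "\<lambda>a. a > 0 \<and> C (- ((1 / a) *\<^sub>R s)) = 0" a]) (use a in simp, use uniq in blast)
qed

lemma phi_ge:
  fixes C :: "real ^ 'n \<Rightarrow> real"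
  assumes cv: "convex_on UNIV C" and inc: "increasing_on UNIV C"
    and inv: "one_invariant C" and c0: "C 0 > 0" and s: "s \<in> pos_orthant"
    and a: "a > 0" "C (- ((1 / a) *\<^sub>R s)) \<le> 0"
  shows "a \<le> phi C s"
proof (rule ccontr)
  assume "\<not> a \<le> phi C s"
  hence "phi C s < a" by simp
  have pc: "phi C s > 0 \<and> C (- ((1 / phi C s) *\<^sub>R s)) = 0" by (rule phi_char[OF cv inc inv c0 s])
  have "0 < C (- ((1 / a) *\<^sub>R s))"
    using C_strict[OF inc s _ \<open>phi C s < a\<close>] pc by simp
  thus False using a by simp
qed

lemma cvx2:
  fixes C :: "real ^ 'n \<Rightarrow> real"
  assumes "convex_on UNIV C" "0 \<le> m" "0 \<le> 1 - m"
  shows "C (m *\<^sub>R x + (1 - m) *\<^sub>R y) \<le> m * C x + (1 - m) * C y"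
proof -
  have "\<forall>u\<ge>0. \<forall>v\<ge>0. u + v = 1 \<longrightarrow> C (u *\<^sub>R x + v *\<^sub>R y) \<le> u * C x + v * C y"
    using assms(1) unfolding convex_on_def by simp
  thus ?thesis using assms(2,3) by simp
qed

lemma pos_comb:
  fixes u v x y :: real
  assumes "0 < x" "0 < y" "0 \<le> u" "0 \<le> v" "u + v = 1"
  shows "0 < u * x + v * y"
proof (cases "u = 0")
  case True thus ?thesis using assms by simp
next
  case False
  hence "0 < u * x" using assms by simp
  moreover have "0 \<le> v * y" using assms by simp
  ultimately show ?thesis by simp
qed

theorem lemma4p4:
  fixes C :: "real ^ 'n \<Rightarrow> real"
  assumes "convex_on UNIV C"
    and "increasing_on UNIV C"
    and "one_invariant C"
    and "C 0 > 0"
  shows "homogeneous1_on pos_orthant (phi C)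
     \<and> concave_on pos_orthant (phi C)
     \<and> increasing_on pos_orthant (phi C)"
proof (intro conjI)
  note ch = phi_char[OF assms]
  note ge = phi_ge[OF assms]
  show "homogeneous1_on pos_orthant (phi C)"
    unfolding homogeneous1_on_def
  proof (intro ballI allI impI)
    fix q :: "real ^ 'n" and a :: real
    assume q: "q \<in> pos_orthant" and a: "a > 0"
    have aq: "a *\<^sub>R q \<in> pos_orthant" using q a by (simp add: pos_orthant_def)
    have c1: "phi C q > 0" "C (- ((1 / phi C q) *\<^sub>R q)) = 0" using ch[OF q] by auto
    have c2: "phi C (a *\<^sub>R q) > 0" "C (- ((1 / phi C (a *\<^sub>R q)) *\<^sub>R (a *\<^sub>R q))) = 0"
      using ch[OF aq] by auto
    have e1: "(1 / (a * phi C q)) *\<^sub>R (a *\<^sub>R q) = (1 / phi C q) *\<^sub>R q"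
      using a by simp
    have e2: "(1 / (phi C (a *\<^sub>R q) / a)) *\<^sub>R q = (1 / phi C (a *\<^sub>R q)) *\<^sub>R (a *\<^sub>R q)"
      using a by simp
    have p1: "0 < a * phi C q" using a c1 by simp
    have p2: "0 < phi C (a *\<^sub>R q) / a" using a c2 by simp
    have "a * phi C q \<le> phi C (a *\<^sub>R q)"
      by (rule ge[OF aq p1]) (simp only: e1 c1(2))
    moreover have "phi C (a *\<^sub>R q) / a \<le> phi C q"
      by (rule ge[OF q p2]) (simp only: e2 c2(2))
    ultimately show "phi C (a *\<^sub>R q) = a * phi C q" using a
      by (simp add: field_simps)
  qed
  show "concave_on pos_orthant (phi C)"
    unfolding concave_on_iff
  proof (intro conjI ballI allI impI)
    show "convex (pos_orthant :: (real ^ 'n) set)"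
      unfolding convex_def pos_orthant_def
      using pos_comb by simp
    fix q r :: "real ^ 'n" and u v :: real
    assume q: "q \<in> pos_orthant" and r: "r \<in> pos_orthant" and u: "u \<ge> 0" and v: "v \<ge> 0"
      and uv: "u + v = 1"
    have qr: "u *\<^sub>R q + v *\<^sub>R r \<in> pos_orthant"
      using q r u v uv pos_comb unfolding pos_orthant_def by simp
    define a where "a = phi C q"
    define b where "b = phi C r"
    have a: "a > 0" "C (- ((1 / a) *\<^sub>R q)) = 0" using ch[OF q] by (auto simp: a_def)
    have b: "b > 0" "C (- ((1 / b) *\<^sub>R r)) = 0" using ch[OF r] by (auto simp: b_def)
    define c where "c = u * a + v * b"
    have cpos: "c > 0" unfolding c_def by (rule pos_comb[OF a(1) b(1) u v uv])
    define mu where "mu = u * a / c"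
    have mu: "mu \<ge> 0" "1 - mu \<ge> 0" "1 - mu = v * b / c"
      using cpos a b u v uv by (auto simp: mu_def c_def field_simps)
    have eq: "- ((1 / c) *\<^sub>R (u *\<^sub>R q + v *\<^sub>R r))
        = mu *\<^sub>R (- ((1 / a) *\<^sub>R q)) + (1 - mu) *\<^sub>R (- ((1 / b) *\<^sub>R r))"
      unfolding mu(3) mu_def
      unfolding vec_eq_iff using a b cpos by (simp add: field_simps, simp add: c_def algebra_simps)
    have "C (- ((1 / c) *\<^sub>R (u *\<^sub>R q + v *\<^sub>R r)))
        \<le> mu * C (- ((1 / a) *\<^sub>R q)) + (1 - mu) * C (- ((1 / b) *\<^sub>R r))"
      unfolding eq by (rule cvx2[OF assms(1) mu(1,2)])
    also have "\<dots> = 0" using a b by simp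
    finally have "c \<le> phi C (u *\<^sub>R q + v *\<^sub>R r)" by (rule ge[OF qr cpos])
    thus "u * phi C q + v * phi C r \<le> phi C (u *\<^sub>R q + v *\<^sub>R r)"
      by (simp add: c_def a_def b_def)
  qed
  show "increasing_on pos_orthant (phi C)"
    unfolding increasing_on_def
  proof (intro ballI impI)
    fix q r :: "real ^ 'n"
    assume q: "q \<in> pos_orthant" and r: "r \<in> pos_orthant" and h: "vge q r \<and> q \<noteq> r"
    have a: "phi C q > 0" "C (- ((1 / phi C q) *\<^sub>R q)) = 0" using ch[OF q] by auto
    have b: "phi C r > 0" "C (- ((1 / phi C r) *\<^sub>R r)) = 0" using ch[OF r] by auto
    define p where "p = phi C r"
    have pp: "p > 0" using b(1) by (simp add: p_def)
    have "vge (- ((1 / p) *\<^sub>R r)) (- ((1 / p) *\<^sub>R q))"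
      unfolding vge_def
    proof
      fix i
      have "r $ i \<le> q $ i" using h unfolding vge_def by blast
      hence "r $ i / p \<le> q $ i / p" using pp by (simp add: divide_right_mono)
      thus "(- ((1 / p) *\<^sub>R q)) $ i \<le> (- ((1 / p) *\<^sub>R r)) $ i" by simp
    qed
    moreover have "- ((1 / p) *\<^sub>R r) \<noteq> - ((1 / p) *\<^sub>R q)"
    proof
      assume "- ((1 / p) *\<^sub>R r) = - ((1 / p) *\<^sub>R q)"
      hence "r = q" using pp by simp
      thus False using h by simp
    qed
    ultimately have "C (- ((1 / p) *\<^sub>R q)) < C (- ((1 / p) *\<^sub>R r))"
      using assms(2) unfolding increasing_on_def by blast
    hence lt: "C (- ((1 / p) *\<^sub>R q)) < 0" using b(2) by (simp add: p_def)
    show "phi C r < phi C q"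
    proof (rule ccontr)
      assume "\<not> phi C r < phi C q"
      hence "phi C q = p \<or> phi C q < p" by (auto simp: p_def)
      thus False
      proof
        assume "phi C q = p"
        thus False using lt a(2) by simp
      next
        assume "phi C q < p"
        from C_strict[OF assms(2) q a(1) this] show False using lt a(2) by simp
      qed
    qed
  qed
qed

end
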